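(* Let $X=\{0,1\}^{\mathbb Z}$, $\mu=(\tfrac12,\tfrac12)^{\mathbb Z}$, $T$ the two-sided shift, and $d(x,x')=\sum_{k\in\mathbb Z}2^{-|k|-2}|x_k-x'_k|$; let $\mathbf X=(X,d,\mu,T)$. With the finite array cubes equipped with the coordinate Euclidean metrics, for every $m\ge1$ and every $p\ge1$, \[\mathrm{Dep}_{2,m,p}(\mathbf X,\mathbf X)\ge\frac{5}{144\sqrt2}.\]
   Context: For a compact metric measure-preserving system $(X,d,\mu,T)$ paired with itself, $\mathcal J(T,T)$ is the set of Borel probability measures on $X\times X$ with both marginals $\mu$ invariant under $T\times T$. For $z_i=(x_i,y_i)$, $\mathcal D^X_{n,m}=(d(T^ax_i,T^bx_j))_{1\le i,j\le n,0\le a,b<m}$, $\mathcal D^Y_{n,m}=(d(T^ay_i,T^by_j))_{1\le i,j\le n,0\le a,b<m}$, $\Phi_{n,m}(\lambda)=\mathrm{Law}_{\lambda^{\otimes n}}(\mathcal D^X_{n,m},\mathcal D^Y_{n,m})$. $W_p$ is the $p$-Wasserstein distance on the finite array cube and $\mathrm{Dep}_{n,m,p}(\mathbf X,\mathbf X)=\sup_{\lambda\in\mathcal J(T,T)}W_p(\Phi_{n,m}(\lambda),\Phi_{n,m}(\mu\otimes\mu))$. *)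

theory Defs
  imports "HOL-Probability.Probability"
begin

definition joinings :: "'a measure \<Rightarrow> ('a \<Rightarrow> 'a) \<Rightarrow> ('a \<times> 'a) measure set" where
  "joinings \<mu> T = {L. sets L = sets (\<mu> \<Otimes>\<^sub>M \<mu>) \<and> prob_space L
      \<and> distr L \<mu> fst = \<mu> \<and> distr L \<mu> snd = \<mu>
      \<and> distr L L (\<lambda>(x, y). (T x, T y)) = L}"

text \<open>Coordinates of the pair of distance arrays (D^X, D^Y): a flag (False = X-array,
  True = Y-array) and indices (i,a,j,b) with 1 <= i,j <= n and 0 <= a,b < m.\<close>
type_synonym coord = "bool \<times> nat \<times> nat \<times> nat \<times> nat"

definition coords :: "nat \<Rightarrow> nat \<Rightarrow> coord set" where
  "coords n m = {(s, i, a, j, b). i \<in> {1..n} \<and> j \<in> {1..n} \<and> a < m \<and> b < m}"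

definition dist_arrays :: "('a \<Rightarrow> 'a \<Rightarrow> real) \<Rightarrow> ('a \<Rightarrow> 'a) \<Rightarrow> nat \<Rightarrow> nat
    \<Rightarrow> (nat \<Rightarrow> 'a \<times> 'a) \<Rightarrow> (coord \<Rightarrow> real)" where
  "dist_arrays d T n m z = restrict (\<lambda>(s, i, a, j, b).
      (let pr = (if s then snd else fst) in d ((T ^^ a) (pr (z i))) ((T ^^ b) (pr (z j)))))
      (coords n m)"

definition Phi :: "('a \<Rightarrow> 'a \<Rightarrow> real) \<Rightarrow> ('a \<Rightarrow> 'a) \<Rightarrow> nat \<Rightarrow> nat
    \<Rightarrow> ('a \<times> 'a) measure \<Rightarrow> (coord \<Rightarrow> real) measure" where
  "Phi d T n m L = distr (PiM {1..n} (\<lambda>_. L)) (PiM (coords n m) (\<lambda>_. borel)) (dist_arrays d T n m)"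

definition eucl_dist :: "'c set \<Rightarrow> ('c \<Rightarrow> real) \<Rightarrow> ('c \<Rightarrow> real) \<Rightarrow> real" where
  "eucl_dist I u v = sqrt (\<Sum>c\<in>I. (u c - v c)\<^sup>2)"

definition couplings :: "'b measure \<Rightarrow> 'b measure \<Rightarrow> ('b \<times> 'b) measure set" where
  "couplings P Q = {\<pi>. sets \<pi> = sets (P \<Otimes>\<^sub>M Q) \<and> prob_space \<pi>
      \<and> distr \<pi> P fst = P \<and> distr \<pi> Q snd = Q}"

definition wasserstein :: "'c set \<Rightarrow> real \<Rightarrow> ('c \<Rightarrow> real) measure \<Rightarrow> ('c \<Rightarrow> real) measure \<Rightarrow> real" where
  "wasserstein I p P Q =
     (enn2real (INF \<pi>\<in>couplings P Q. \<integral>\<^sup>+ w. ennreal (eucl_dist I (fst w) (snd w) powr p) \<partial>\<pi>)) powr (1 / p)"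

definition Dep :: "('a \<Rightarrow> 'a \<Rightarrow> real) \<Rightarrow> 'a measure \<Rightarrow> ('a \<Rightarrow> 'a) \<Rightarrow> nat \<Rightarrow> nat \<Rightarrow> real \<Rightarrow> ereal" where
  "Dep d \<mu> T n m p = (SUP L\<in>joinings \<mu> T.
      ereal (wasserstein (coords n m) p (Phi d T n m L) (Phi d T n m (\<mu> \<Otimes>\<^sub>M \<mu>))))"

definition bern_mu :: "(int \<Rightarrow> bool) measure" where
  "bern_mu = PiM UNIV (\<lambda>_::int. measure_pmf (bernoulli_pmf (1/2)))"

definition shift :: "(int \<Rightarrow> bool) \<Rightarrow> (int \<Rightarrow> bool)" where
  "shift x = (\<lambda>k. x (k + 1))"

definition bern_d :: "(int \<Rightarrow> bool) \<Rightarrow> (int \<Rightarrow> bool) \<Rightarrow> real" where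
  "bern_d x x' = (\<Sum>\<^sub>\<infinity>k\<in>UNIV. 2 powr (- real_of_int \<bar>k\<bar> - 2) * of_bool (x k \<noteq> x' k))"

end

theory Submission
  imports Defs
begin


definition wt :: "int \<Rightarrow> real" where "wt k = 2 powr (- real_of_int \<bar>k\<bar> - 2)"

lemma wt_nonneg: "0 \<le> wt k" by (simp add: wt_def)

lemma two_powr_neg: "2 powr (- real (n + k)) = (1/2::real)^n / 2^k"
proof -
  have "2 powr (- real (n + k)) = inverse (2 powr real (n+k))" by (rule powr_minus)
  also have "2 powr real (n+k) = (2::real)^(n+k)" by (rule powr_realpow) simp
  also have "inverse ((2::real)^(n+k)) = (1/2::real)^n / 2^k" by (simp add: power_add power_one_over field_simps)
  finally show ?thesis .
qed

lemma wt_pos: "wt (int n) = (1/2)^n / 4"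
proof -
  have e: "- real_of_int \<bar>int n\<bar> - 2 = - real (n + 2)" by simp
  show ?thesis by (simp only: wt_def e two_powr_neg) simp
qed

lemma wt_neg: "wt (- int n - 1) = (1/2)^n / 8"
proof -
  have e: "- real_of_int \<bar>- int n - 1\<bar> - 2 = - real (n + 3)" by simp
  show ?thesis by (simp only: wt_def e two_powr_neg) simp
qed

lemma UNIV_int_split: "(UNIV::int set) = range int \<union> range (\<lambda>n. - int n - 1)"
proof -
  { fix k :: int
    have "k \<in> range int \<union> range (\<lambda>n. - int n - 1)"
    proof (cases "k \<ge> 0")
      case True then show ?thesis by (metis UnI1 nonneg_int_cases rangeI)
    next
      case False then have "k = - int (nat (- k - 1)) - 1" by simp
      then show ?thesis by blast
    qed }
  then show ?thesis by blast
qed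

lemma range_disj: "range int \<inter> range (\<lambda>n. - int n - 1) = {}" by auto

lemma summable_on_int_split:
  fixes f :: "int \<Rightarrow> real"
  assumes "summable (\<lambda>n. f (int n))" "summable (\<lambda>n. f (- int n - 1))" "\<And>k. f k \<ge> 0"
  shows "f summable_on UNIV"
    and "infsum f UNIV = (\<Sum>n. f (int n)) + (\<Sum>n. f (- int n - 1))"
proof -
  have i1: "inj int" by (simp add: inj_on_def)
  have i2: "inj (\<lambda>n::nat. - int n - 1)" by (simp add: inj_on_def)
  have h1: "(f has_sum (\<Sum>n. f (int n))) (range int)"
    using has_sum_reindex[OF i1, of f] sums_nonneg_imp_has_sum[OF summable_sums[OF assms(1)]] assms(3)
    by (simp add: o_def)
  have h2: "(f has_sum (\<Sum>n. f (- int n - 1))) (range (\<lambda>n. - int n - 1))"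
    using has_sum_reindex[OF i2, of f] sums_nonneg_imp_has_sum[OF summable_sums[OF assms(2)]] assms(3)
    by (simp add: o_def)
  have h: "(f has_sum ((\<Sum>n. f (int n)) + (\<Sum>n. f (- int n - 1)))) UNIV"
    using has_sum_Un_disjoint[OF h1 h2 range_disj] UNIV_int_split by simp
  then show "f summable_on UNIV" by (rule has_sum_imp_summable)
  show "infsum f UNIV = (\<Sum>n. f (int n)) + (\<Sum>n. f (- int n - 1))"
    using h by (rule infsumI)
qed

definition bt :: "(int \<Rightarrow> bool) \<Rightarrow> (int \<Rightarrow> bool) \<Rightarrow> int \<Rightarrow> real" where
  "bt x y k = wt k * of_bool (x k \<noteq> y k)"

lemma bt_nonneg: "0 \<le> bt x y k" by (simp add: bt_def wt_nonneg)
lemma bt_le: "bt x y k \<le> wt k" by (simp add: bt_def wt_nonneg)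

lemma summ_geo: "summable (\<lambda>n::nat. (1/2::real)^n / c)"
  by (intro summable_divide complete_algebra_summable_geometric) simp

lemma bt_summ1: "summable (\<lambda>n. bt x y (int n))"
proof (rule summable_comparison_test[OF _ summ_geo[of 4]])
  show "\<exists>N. \<forall>n\<ge>N. norm (bt x y (int n)) \<le> (1 / 2) ^ n / 4"
    using bt_le[of x y "int _"] bt_nonneg[of x y "int _"] by (auto simp: wt_pos)
qed

lemma bt_summ2: "summable (\<lambda>n. bt x y (- int n - 1))"
proof (rule summable_comparison_test[OF _ summ_geo[of 8]])
  show "\<exists>N. \<forall>n\<ge>N. norm (bt x y (- int n - 1)) \<le> (1 / 2) ^ n / 8"
    using bt_le[of x y "- int _ - 1"] bt_nonneg[of x y "- int _ - 1"] by (auto simp: wt_neg)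
qed

lemma wt_summ1: "summable (\<lambda>n. wt (int n))"
  using summ_geo[of 4] by (simp add: wt_pos)
lemma wt_summ2: "summable (\<lambda>n. wt (- int n - 1))"
  using summ_geo[of 8] by (simp add: wt_neg)

lemma bern_d_eq: "bern_d x y = infsum (bt x y) UNIV"
  unfolding bern_d_def bt_def wt_def by simp

lemma bt_summable: "bt x y summable_on UNIV"
  using summable_on_int_split(1)[OF bt_summ1 bt_summ2 bt_nonneg] .

lemma bern_d_suminf: "bern_d x y = (\<Sum>n. bt x y (int n)) + (\<Sum>n. bt x y (- int n - 1))"
  using summable_on_int_split(2)[OF bt_summ1 bt_summ2 bt_nonneg] bern_d_eq by simp

definition WT where "WT = infsum wt UNIV"

lemma bern_d_nonneg: "0 \<le> bern_d x y"
  unfolding bern_d_eq by (rule infsum_nonneg) (simp add: bt_nonneg)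

lemma bern_d_le: "bern_d x y \<le> WT"
  unfolding bern_d_eq WT_def
  by (rule infsum_mono[OF bt_summable summable_on_int_split(1)[OF wt_summ1 wt_summ2 wt_nonneg]])
     (simp add: bt_le)

definition flip0 :: "(int \<Rightarrow> bool) \<Rightarrow> (int \<Rightarrow> bool)" where
  "flip0 x = x(0 := \<not> x 0)"

lemma bern_d_flip: "bern_d (flip0 x) y = bern_d x y + (if x 0 = y 0 then 1/4 else - 1/4)"
proof -
  have U: "(UNIV::int set) = insert 0 (UNIV - {0})" by auto
  have s: "bt u v summable_on (UNIV - {0})" for u v
    by (rule summable_on_subset[OF bt_summable]) simp
  have e: "bern_d u v = bt u v 0 + infsum (bt u v) (UNIV - {0})" for u v
    unfolding bern_d_eq by (subst U) (rule infsum_insert[OF s], simp)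
  have c: "infsum (bt (flip0 x) y) (UNIV - {0}) = infsum (bt x y) (UNIV - {0})"
    by (rule infsum_cong) (simp add: bt_def flip0_def)
  have w0: "wt 0 = 1/4" using wt_pos[of 0] by simp
  show ?thesis using e[of "flip0 x" y] e[of x y] c w0 by (simp add: bt_def flip0_def)
qed



abbreviation "BB \<equiv> measure_pmf (bernoulli_pmf (1/2))"

lemma bern_mu_prob: "prob_space bern_mu"
  unfolding bern_mu_def by (rule prob_space_PiM) (rule prob_space_measure_pmf)

lemma space_bern_mu: "space bern_mu = UNIV"
  unfolding bern_mu_def by (auto simp: space_PiM PiE_def extensional_def)

lemma BB_cs: "measurable N BB = measurable N (count_space UNIV)"
  by (rule measurable_cong_sets) auto

lemma comp_meas[measurable]: "(\<lambda>x. x k) \<in> measurable bern_mu (count_space UNIV)"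
proof -
  have "(\<lambda>x. x k) \<in> measurable bern_mu BB"
    unfolding bern_mu_def by (rule measurable_component_singleton) simp
  then show ?thesis by (simp add: BB_cs)
qed

lemma bern_d_meas:
  assumes f: "f \<in> measurable N bern_mu" and g: "g \<in> measurable N bern_mu"
  shows "(\<lambda>w. bern_d (f w) (g w)) \<in> borel_measurable N"
proof -
  have [measurable]: "(\<lambda>w. f w k) \<in> measurable N (count_space UNIV)" for k
    using measurable_compose[OF f comp_meas] by simp
  have [measurable]: "(\<lambda>w. g w k) \<in> measurable N (count_space UNIV)" for k
    using measurable_compose[OF g comp_meas] by simp
  have [measurable]: "(\<lambda>w. bt (f w) (g w) k) \<in> borel_measurable N" for k
    unfolding bt_def by measurable
  show ?thesis unfolding bern_d_suminf by measurable
qed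

lemma shift_meas: "shift \<in> measurable bern_mu bern_mu"
proof -
  have "(\<lambda>x. x (i + 1)) \<in> measurable bern_mu BB" for i
    unfolding bern_mu_def by (rule measurable_component_singleton) simp
  then show ?thesis unfolding bern_mu_def shift_def
    by (intro measurable_PiM_single') (auto simp: bern_mu_def)
qed

lemma flip0_meas: "flip0 \<in> measurable bern_mu bern_mu"
proof -
  have "(\<lambda>x. if i = 0 then \<not> x i else x i) \<in> measurable bern_mu BB" for i
    unfolding BB_cs by measurable
  moreover have "(\<lambda>x. flip0 x i) = (\<lambda>x. if i = 0 then \<not> x i else x i)" for i
    by (auto simp: flip0_def fun_eq_iff)
  ultimately have "(\<lambda>x. flip0 x i) \<in> measurable (PiM UNIV (\<lambda>_::int. BB)) BB" for i
    unfolding bern_mu_def by metis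
  then show ?thesis unfolding bern_mu_def
    by (intro measurable_PiM_single') (auto simp: space_PiM)
qed

lemma shift_pres: "distr bern_mu bern_mu shift = bern_mu"
proof -
  have "distr (PiM UNIV (\<lambda>_::int. BB)) (PiM UNIV (\<lambda>i. BB)) (\<lambda>\<omega>. \<lambda>n\<in>UNIV. \<omega> (n + 1)) = PiM UNIV (\<lambda>i. BB)"
    by (rule distr_PiM_reindex[of UNIV "\<lambda>_. BB" "\<lambda>k::int. k + 1" UNIV]) (auto simp: prob_space_measure_pmf inj_on_def)
  then show ?thesis unfolding bern_mu_def shift_def restrict_UNIV .
qed

lemma BB_not: "emeasure BB (Not -` A) = emeasure BB A"
proof -
  have "card (Not -` A) = card A" by (rule card_vimage_inj) (auto simp: inj_on_def)
  then show ?thesis unfolding measure_pmf_bernoulli_half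
    by (simp add: emeasure_uniform_count_measure)
qed

lemma flip0_pres: "distr bern_mu bern_mu flip0 = bern_mu"
proof -
  interpret PP: product_prob_space "\<lambda>_::int. BB" UNIV
    by (rule product_prob_spaceI) (rule prob_space_measure_pmf)
  show ?thesis unfolding bern_mu_def
  proof (rule PP.PiM_eq)
    show "sets (distr (PiM UNIV (\<lambda>_. BB)) (PiM UNIV (\<lambda>_. BB)) flip0) = sets (PiM UNIV (\<lambda>_. BB))" by simp
    fix J :: "int set" and F assume J: "finite J" "J \<subseteq> UNIV" and F: "\<And>j. j \<in> J \<Longrightarrow> F j \<in> sets BB"
    define F' where "F' j = (if j = 0 then Not -` F j else F j)" for j
    have pre: "flip0 -` prod_emb UNIV (\<lambda>_. BB) J (Pi\<^sub>E J F) \<inter> space (PiM UNIV (\<lambda>_. BB))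
        = prod_emb UNIV (\<lambda>_. BB) J (Pi\<^sub>E J F')"
      by (auto simp: prod_emb_def PiE_iff F'_def flip0_def space_PiM split: if_splits)
    have "emeasure (distr (PiM UNIV (\<lambda>_. BB)) (PiM UNIV (\<lambda>_. BB)) flip0) (prod_emb UNIV (\<lambda>_. BB) J (Pi\<^sub>E J F))
        = emeasure (PiM UNIV (\<lambda>_. BB)) (prod_emb UNIV (\<lambda>_. BB) J (Pi\<^sub>E J F'))"
      using J F flip0_meas unfolding bern_mu_def
      by (subst emeasure_distr) (auto intro!: sets_PiM_I simp: pre[symmetric])
    also have "\<dots> = (\<Prod>j\<in>J. emeasure BB (F' j))"
      using J by (intro PP.emeasure_PiM_emb) auto
    also have "\<dots> = (\<Prod>j\<in>J. emeasure BB (F j))"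
      by (intro prod.cong) (auto simp: F'_def BB_not)
    finally show "emeasure (distr (PiM UNIV (\<lambda>_. BB)) (PiM UNIV (\<lambda>_. BB)) flip0) (prod_emb UNIV (\<lambda>_. BB) J (Pi\<^sub>E J F)) = (\<Prod>j\<in>J. emeasure BB (F j))" .
  qed
qed



lemma pair_pres:
  assumes P: "prob_space M" and f: "f \<in> measurable M M" and g: "g \<in> measurable M M"
    and pf: "distr M M f = M" and pg: "distr M M g = M"
  shows "distr (M \<Otimes>\<^sub>M M) (M \<Otimes>\<^sub>M M) (\<lambda>(x, y). (f x, g y)) = M \<Otimes>\<^sub>M M"
proof -
  have "sigma_finite_measure (distr M M g)" unfolding pg using P by (rule prob_space_imp_sigma_finite)
  from pair_measure_distr[OF f g this] show ?thesis unfolding pf pg by simp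
qed

lemma PiM_compwise_pres:
  assumes fin: "finite I" and P: "prob_space K"
    and g: "\<And>i. i \<in> I \<Longrightarrow> g i \<in> measurable K K"
    and pg: "\<And>i. i \<in> I \<Longrightarrow> distr K K (g i) = K"
  shows "distr (PiM I (\<lambda>_. K)) (PiM I (\<lambda>_. K)) (\<lambda>z. \<lambda>i\<in>I. g i (z i)) = PiM I (\<lambda>_. K)"
proof -
  interpret PP: product_prob_space "\<lambda>_. K" I
    by (rule product_prob_spaceI) (rule P)
  have meas: "(\<lambda>z. \<lambda>i\<in>I. g i (z i)) \<in> measurable (PiM I (\<lambda>_. K)) (PiM I (\<lambda>_. K))"
  proof (rule measurable_restrict)
    fix i assume i: "i \<in> I"
    show "(\<lambda>z. g i (z i)) \<in> measurable (PiM I (\<lambda>_. K)) K"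
      by (rule measurable_compose[OF measurable_component_singleton[OF i] g[OF i]])
  qed
  show ?thesis
  proof (rule PP.PiM_eqI[OF fin])
    show "sets (distr (PiM I (\<lambda>_. K)) (PiM I (\<lambda>_. K)) (\<lambda>z. \<lambda>i\<in>I. g i (z i))) = sets (PiM I (\<lambda>_. K))" by simp
    fix A assume A: "\<And>i. i \<in> I \<Longrightarrow> A i \<in> sets K"
    have pre: "(\<lambda>z. \<lambda>i\<in>I. g i (z i)) -` Pi\<^sub>E I A \<inter> space (PiM I (\<lambda>_. K)) = Pi\<^sub>E I (\<lambda>i. g i -` A i \<inter> space K)"
      using g by (auto simp: space_PiM PiE_iff measurable_space)
    have "emeasure (distr (PiM I (\<lambda>_. K)) (PiM I (\<lambda>_. K)) (\<lambda>z. \<lambda>i\<in>I. g i (z i))) (Pi\<^sub>E I A)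
        = emeasure (PiM I (\<lambda>_. K)) (Pi\<^sub>E I (\<lambda>i. g i -` A i \<inter> space K))"
      using A meas by (subst emeasure_distr) (auto intro!: sets_PiM_I_finite fin simp: pre)
    also have "\<dots> = (\<Prod>i\<in>I. emeasure K (g i -` A i \<inter> space K))"
      using A g fin by (intro PP.emeasure_PiM) (auto intro!: measurable_sets)
    also have "\<dots> = (\<Prod>i\<in>I. emeasure K (A i))"
    proof (intro prod.cong refl)
      fix i assume i: "i \<in> I"
      have "emeasure K (A i) = emeasure (distr K K (g i)) (A i)" using pg[OF i] by simp
      also have "\<dots> = emeasure K (g i -` A i \<inter> space K)" using A[OF i] g[OF i] by (rule emeasure_distr[rotated])
      finally show "emeasure K (g i -` A i \<inter> space K) = emeasure K (A i)" by simp
    qed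
    finally show "emeasure (distr (PiM I (\<lambda>_. K)) (PiM I (\<lambda>_. K)) (\<lambda>z. \<lambda>i\<in>I. g i (z i))) (Pi\<^sub>E I A) = (\<Prod>i\<in>I. emeasure K (A i))" .
  qed
qed

definition L0 where "L0 = distr bern_mu (bern_mu \<Otimes>\<^sub>M bern_mu) (\<lambda>x. (x, x))"

lemma diag_meas: "(\<lambda>x. (x, x)) \<in> measurable bern_mu (bern_mu \<Otimes>\<^sub>M bern_mu)"
  by measurable

lemma L0_joining: "L0 \<in> joinings bern_mu shift"
proof -
  have P: "prob_space bern_mu" by (rule bern_mu_prob)
  have s1: "sets L0 = sets (bern_mu \<Otimes>\<^sub>M bern_mu)" unfolding L0_def by simp
  have s2: "prob_space L0" unfolding L0_def by (rule prob_space.prob_space_distr[OF P diag_meas])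
  have s3: "distr L0 bern_mu fst = bern_mu"
    unfolding L0_def by (subst distr_distr) (auto simp: diag_meas o_def intro: distr_id[unfolded id_def])
  have s4: "distr L0 bern_mu snd = bern_mu"
    unfolding L0_def by (subst distr_distr) (auto simp: diag_meas o_def intro: distr_id[unfolded id_def])
  have sm: "(\<lambda>(x, y). (shift x, shift y)) \<in> measurable (bern_mu \<Otimes>\<^sub>M bern_mu) (bern_mu \<Otimes>\<^sub>M bern_mu)"
    using shift_meas by measurable
  have "distr L0 L0 (\<lambda>(x, y). (shift x, shift y)) = distr L0 (bern_mu \<Otimes>\<^sub>M bern_mu) (\<lambda>(x, y). (shift x, shift y))"
    by (rule distr_cong) (auto simp: s1)
  also have "\<dots> = distr bern_mu (bern_mu \<Otimes>\<^sub>M bern_mu) ((\<lambda>(x, y). (shift x, shift y)) \<circ> (\<lambda>x. (x, x)))"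
    unfolding L0_def by (rule distr_distr[OF sm diag_meas])
  also have "\<dots> = distr bern_mu (bern_mu \<Otimes>\<^sub>M bern_mu) ((\<lambda>x. (x, x)) \<circ> shift)"
    by (simp add: o_def)
  also have "\<dots> = distr (distr bern_mu bern_mu shift) (bern_mu \<Otimes>\<^sub>M bern_mu) (\<lambda>x. (x, x))"
    by (rule distr_distr[OF diag_meas shift_meas, symmetric])
  also have "\<dots> = L0" unfolding shift_pres L0_def ..
  finally show ?thesis unfolding joinings_def using s1 s2 s3 s4 by blast
qed



lemma coupling_prod:
  assumes P: "prob_space P" and Q: "prob_space Q"
  shows "P \<Otimes>\<^sub>M Q \<in> couplings P Q"
proof -
  interpret PQ: pair_prob_space P Q using P Q by (simp add: pair_prob_space_def pair_sigma_finite_def prob_space_imp_sigma_finite)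
  have f: "distr (P \<Otimes>\<^sub>M Q) P fst = P" using prob_space.distr_pair_fst[OF Q] .
  have "distr (P \<Otimes>\<^sub>M Q) Q snd = distr (distr (Q \<Otimes>\<^sub>M P) (P \<Otimes>\<^sub>M Q) (\<lambda>(x, y). (y, x))) Q snd"
    by (subst PQ.distr_pair_swap) simp
  also have "\<dots> = distr (Q \<Otimes>\<^sub>M P) Q (snd \<circ> (\<lambda>(x, y). (y, x)))"
    by (rule distr_distr) auto
  also have "\<dots> = distr (Q \<Otimes>\<^sub>M P) Q fst"
    by (rule distr_cong) auto
  also have "\<dots> = Q" using prob_space.distr_pair_fst[OF P] .
  finally show ?thesis unfolding couplings_def using f prob_space_pair[OF P Q] by blast
qed

lemma couplings_AE_fst:
  assumes "\<pi> \<in> couplings P Q" and "AE u in P. A u"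
  shows "AE w in \<pi>. A (fst w)"
proof -
  have s: "sets \<pi> = sets (P \<Otimes>\<^sub>M Q)" and d: "distr \<pi> P fst = P" using assms(1) by (auto simp: couplings_def)
  have m: "fst \<in> measurable \<pi> P" using measurable_fst by (subst measurable_cong_sets[OF s refl]) 
  show ?thesis by (rule AE_distrD[OF m]) (unfold d, rule assms(2))
qed

lemma couplings_AE_snd:
  assumes "\<pi> \<in> couplings P Q" and "AE u in Q. A u"
  shows "AE w in \<pi>. A (snd w)"
proof -
  have s: "sets \<pi> = sets (P \<Otimes>\<^sub>M Q)" and d: "distr \<pi> Q snd = Q" using assms(1) by (auto simp: couplings_def)
  have m: "snd \<in> measurable \<pi> Q" using measurable_snd by (subst measurable_cong_sets[OF s refl]) 
  show ?thesis by (rule AE_distrD[OF m]) (unfold d, rule assms(2))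
qed

lemma eucl_nonneg: "0 \<le> eucl_dist I u v"
  unfolding eucl_dist_def by (simp add: sum_nonneg)

lemma eucl_bound:
  assumes "finite I" "\<forall>c\<in>I. \<bar>u c\<bar> \<le> K" "\<forall>c\<in>I. \<bar>v c\<bar> \<le> K"
  shows "eucl_dist I u v \<le> sqrt (real (card I) * (2 * K)^2)"
proof -
  have "(\<Sum>c\<in>I. (u c - v c)\<^sup>2) \<le> (\<Sum>c\<in>I. (2 * K)^2)"
  proof (rule sum_mono)
    fix c assume c: "c \<in> I"
    have "\<bar>u c - v c\<bar> \<le> 2 * K" using assms(2,3) c by fastforce
    then have "\<bar>u c - v c\<bar>^2 \<le> (2 * K)^2" by (rule power_mono) simp
    then show "(u c - v c)\<^sup>2 \<le> (2 * K)\<^sup>2" by simp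
  qed
  then show ?thesis unfolding eucl_dist_def by (intro real_sqrt_le_mono) simp
qed

lemma wass_lower:
  fixes P Q :: "('c \<Rightarrow> real) measure"
  assumes fin: "finite I" and PP: "prob_space P" and QQ: "prob_space Q"
    and bP: "AE u in P. \<forall>c\<in>I. \<bar>u c\<bar> \<le> K" and bQ: "AE u in Q. \<forall>c\<in>I. \<bar>u c\<bar> \<le> K"
    and low: "\<And>\<pi>. \<pi> \<in> couplings P Q \<Longrightarrow>
       ennreal (c powr p) \<le> (\<integral>\<^sup>+ w. ennreal (eucl_dist I (fst w) (snd w) powr p) \<partial>\<pi>)"
    and c: "c > 0" and p: "p > 0"
  shows "c \<le> wasserstein I p P Q"
proof -
  define X where "X = (INF \<pi>\<in>couplings P Q. \<integral>\<^sup>+ w. ennreal (eucl_dist I (fst w) (snd w) powr p) \<partial>\<pi>)"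
  define E where "E = sqrt (real (card I) * (2 * K)^2)"
  have X1: "ennreal (c powr p) \<le> X" unfolding X_def by (rule INF_greatest) (rule low)
  have cp: "P \<Otimes>\<^sub>M Q \<in> couplings P Q" by (rule coupling_prod[OF PP QQ])
  have "X \<le> (\<integral>\<^sup>+ w. ennreal (eucl_dist I (fst w) (snd w) powr p) \<partial>(P \<Otimes>\<^sub>M Q))"
    unfolding X_def by (rule INF_lower[OF cp])
  also have "\<dots> \<le> (\<integral>\<^sup>+ w. ennreal (E powr p) \<partial>(P \<Otimes>\<^sub>M Q))"
  proof (rule nn_integral_mono_AE)
    have "AE w in P \<Otimes>\<^sub>M Q. \<forall>c\<in>I. \<bar>fst w c\<bar> \<le> K" by (rule couplings_AE_fst[OF cp bP])
    moreover have "AE w in P \<Otimes>\<^sub>M Q. \<forall>c\<in>I. \<bar>snd w c\<bar> \<le> K" by (rule couplings_AE_snd[OF cp bQ])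
    ultimately show "AE w in P \<Otimes>\<^sub>M Q. ennreal (eucl_dist I (fst w) (snd w) powr p) \<le> ennreal (E powr p)"
    proof eventually_elim
      case (elim w)
      have "eucl_dist I (fst w) (snd w) \<le> E" unfolding E_def by (rule eucl_bound[OF fin elim])
      then have "eucl_dist I (fst w) (snd w) powr p \<le> E powr p"
        by (intro powr_mono2) (auto simp: eucl_nonneg less_imp_le[OF p])
      then show ?case by (rule ennreal_leI)
    qed
  qed
  also have "\<dots> = ennreal (E powr p)"
    using prob_space.emeasure_space_1[OF prob_space_pair[OF PP QQ]] by simp
  finally have X2: "X \<le> ennreal (E powr p)" .
  then have Xt: "X < top" by (simp add: le_less_trans)
  have "enn2real (ennreal (c powr p)) \<le> enn2real X" by (rule enn2real_mono[OF X1 Xt])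
  then have e: "c powr p \<le> enn2real X" by simp
  have "c = (c powr p) powr (1 / p)" using c p by (simp add: powr_powr)
  also have "\<dots> \<le> (enn2real X) powr (1 / p)" using e p by (intro powr_mono2) auto
  finally show ?thesis unfolding wasserstein_def X_def .
qed



lemma finite_coords: "finite (coords n m)"
proof -
  have "coords n m \<subseteq> UNIV \<times> {1..n} \<times> {..<m} \<times> {1..n} \<times> {..<m}"
    by (auto simp: coords_def)
  moreover have "finite (UNIV \<times> {1..n} \<times> {..<m} \<times> {1..n} \<times> {..<m} :: coord set)" by simp
  ultimately show ?thesis by (rule finite_subset)
qed

lemma dist_arrays_val:
  "(s, i, 0, j, 0) \<in> coords n m \<Longrightarrow> dist_arrays d T n m z (s, i, 0, j, 0)
     = (if s then d (snd (z i)) (snd (z j)) else d (fst (z i)) (fst (z j)))"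
  by (simp add: dist_arrays_def)

lemma dist_arrays_bounds:
  assumes "c \<in> coords n m"
  shows "\<bar>dist_arrays bern_d T n m z c\<bar> \<le> WT"
proof -
  obtain s i a j b where cc: "c = (s, i, a, j, b)" by (cases c) auto
  show ?thesis using assms unfolding cc
    by (cases s) (auto simp: dist_arrays_def Let_def bern_d_nonneg bern_d_le)
qed

lemma dist_arrays_meas:
  assumes sK: "sets K = sets (bern_mu \<Otimes>\<^sub>M bern_mu)"
  shows "dist_arrays bern_d shift n m \<in> measurable (PiM {1..n} (\<lambda>_. K)) (PiM (coords n m) (\<lambda>_. borel))"
proof -
  have eq: "dist_arrays bern_d shift n m = (\<lambda>z. \<lambda>c\<in>coords n m. (case c of (s, i, a, j, b) \<Rightarrow>
      (let pr = (if s then snd else fst) in bern_d ((shift ^^ a) (pr (z i))) ((shift ^^ b) (pr (z j))))))"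
    by (simp add: dist_arrays_def fun_eq_iff)
  have mf: "fst \<in> measurable K bern_mu" by (subst measurable_cong_sets[OF sK refl]) (rule measurable_fst)
  have ms: "snd \<in> measurable K bern_mu" by (subst measurable_cong_sets[OF sK refl]) (rule measurable_snd)
  have sh: "shift ^^ a \<in> measurable bern_mu bern_mu" for a by (rule measurable_compose_n[OF shift_meas])
  have cf: "(\<lambda>z. (shift ^^ a) (fst (z i))) \<in> measurable (PiM {1..n} (\<lambda>_. K)) bern_mu" if "i \<in> {1..n}" for a i
    by (rule measurable_compose[OF measurable_compose[OF measurable_component_singleton[OF that] mf] sh])
  have cs: "(\<lambda>z. (shift ^^ a) (snd (z i))) \<in> measurable (PiM {1..n} (\<lambda>_. K)) bern_mu" if "i \<in> {1..n}" for a i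
    by (rule measurable_compose[OF measurable_compose[OF measurable_component_singleton[OF that] ms] sh])
  show ?thesis unfolding eq
  proof (rule measurable_restrict)
    fix c assume c: "c \<in> coords n m"
    obtain s i a j b where cc: "c = (s, i, a, j, b)" by (cases c) auto
    with c have i: "i \<in> {1..n}" and j: "j \<in> {1..n}" by (auto simp: coords_def)
    show "(\<lambda>z. case c of (s, i, a, j, b) \<Rightarrow> let pr = if s then snd else fst in bern_d ((shift ^^ a) (pr (z i))) ((shift ^^ b) (pr (z j))))
        \<in> borel_measurable (PiM {1..n} (\<lambda>_. K))"
      unfolding cc using bern_d_meas[OF cf[OF i] cf[OF j]] bern_d_meas[OF cs[OF i] cs[OF j]]
      by (cases s) (simp_all add: Let_def)
  qed
qed

lemma Phi_props:
  assumes sK: "sets K = sets (bern_mu \<Otimes>\<^sub>M bern_mu)" and PK: "prob_space K"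
  shows "prob_space (Phi bern_d shift n m K)"
    and "sets (Phi bern_d shift n m K) = sets (PiM (coords n m) (\<lambda>_. borel))"
    and "AE u in Phi bern_d shift n m K. \<forall>c\<in>coords n m. \<bar>u c\<bar> \<le> WT"
proof -
  have PO: "prob_space (PiM {1..n} (\<lambda>_. K))" by (rule prob_space_PiM) (rule PK)
  show "prob_space (Phi bern_d shift n m K)" unfolding Phi_def
    by (rule prob_space.prob_space_distr[OF PO dist_arrays_meas[OF sK]])
  show "sets (Phi bern_d shift n m K) = sets (PiM (coords n m) (\<lambda>_. borel))" unfolding Phi_def by simp
  have fc: "finite (coords n m)" by (rule finite_coords)
  have [measurable]: "(\<lambda>u. u c) \<in> borel_measurable (PiM (coords n m) (\<lambda>_. borel))" if "c \<in> coords n m" for c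
    by (rule measurable_component_singleton[OF that])
  have "Measurable.pred (PiM (coords n m) (\<lambda>_. borel)) (\<lambda>u. \<forall>c\<in>coords n m. \<bar>u c\<bar> \<le> WT)"
    using fc by measurable
  then have ms: "{u \<in> space (PiM (coords n m) (\<lambda>_. borel)). \<forall>c\<in>coords n m. \<bar>u c\<bar> \<le> WT} \<in> sets (PiM (coords n m) (\<lambda>_. borel))"
    by (simp add: pred_def)
  show "AE u in Phi bern_d shift n m K. \<forall>c\<in>coords n m. \<bar>u c\<bar> \<le> WT"
    unfolding Phi_def
    by (subst AE_distr_iff[OF dist_arrays_meas[OF sK] ms]) (auto intro!: AE_I2 dist_arrays_bounds)
qed



lemma tangent_powr:
  fixes a c p :: real
  assumes a: "a \<ge> 0" and c: "c > 0" and p: "p \<ge> 1"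
  shows "c powr p + p * c powr (p - 1) * (a - c) \<le> a powr p"
proof (cases "a = 0")
  case True
  have cc: "c powr (p - 1) * c = c powr p" using c by (simp add: powr_diff)
  have "c powr p + p * c powr (p - 1) * (a - c) = (1 - p) * c powr p"
    using True cc by (simp add: algebra_simps)
  also have "\<dots> \<le> 0" using p by (simp add: mult_nonpos_nonneg)
  finally show ?thesis using True by simp
next
  case False
  have d: "((\<lambda>x. x powr p) has_field_derivative (p * c powr (p - 1))) (at c within {0<..})"
    using c by (auto intro!: derivative_eq_intros)
  have "p * c powr (p - 1) * (a - c) \<le> a powr p - c powr p"
    by (rule convex_on_imp_above_tangent[OF powr_convex[OF p] _ _ _ d])
       (use c a False in \<open>auto simp: interior_open\<close>)
  then show ?thesis by simp
qed

lemma four_powr: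
  fixes a1 a2 a3 a4 c p :: real
  assumes "a1 \<ge> 0" "a2 \<ge> 0" "a3 \<ge> 0" "a4 \<ge> 0" "c > 0" "p \<ge> 1" "a1 + a2 + a3 + a4 \<ge> 4 * c"
  shows "4 * c powr p \<le> a1 powr p + a2 powr p + a3 powr p + a4 powr p"
proof -
  have k: "0 \<le> p * c powr (p - 1)" using assms by simp
  have "4 * c powr p \<le> 4 * c powr p + p * c powr (p - 1) * ((a1 + a2 + a3 + a4) - 4 * c)"
    using k assms by simp
  also have "\<dots> = (c powr p + p * c powr (p - 1) * (a1 - c)) + (c powr p + p * c powr (p - 1) * (a2 - c))
      + (c powr p + p * c powr (p - 1) * (a3 - c)) + (c powr p + p * c powr (p - 1) * (a4 - c))"
    by (simp add: algebra_simps)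
  also have "\<dots> \<le> a1 powr p + a2 powr p + a3 powr p + a4 powr p"
    using tangent_powr[of a1 c p] tangent_powr[of a2 c p] tangent_powr[of a3 c p] tangent_powr[of a4 c p] assms
    by linarith
  finally show ?thesis .
qed

lemma four_abs:
  fixes t e e' :: real
  assumes "\<bar>e\<bar> = 1/4" "\<bar>e'\<bar> = 1/4"
  shows "\<bar>t\<bar> + \<bar>t + e\<bar> + \<bar>t - e'\<bar> + \<bar>t + e - e'\<bar> \<ge> 1/2"
proof -
  have "e = 1/4 \<or> e = -1/4" using assms(1) by arith
  moreover have "e' = 1/4 \<or> e' = -1/4" using assms(2) by arith
  ultimately show ?thesis by (elim disjE) (simp_all add: abs_if)
qed

lemma lip:
  fixes u v :: "'c \<Rightarrow> real"
  assumes I: "finite I" "c1 \<in> I" "c2 \<in> I" "c1 \<noteq> c2"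
  shows "\<bar>\<bar>u c1 - u c2\<bar> / sqrt 2 - \<bar>v c1 - v c2\<bar> / sqrt 2\<bar> \<le> eucl_dist I u v"
proof -
  define a where "a = u c1 - v c1"
  define b where "b = u c2 - v c2"
  have "\<bar>\<bar>u c1 - u c2\<bar> / sqrt 2 - \<bar>v c1 - v c2\<bar> / sqrt 2\<bar> = \<bar>\<bar>u c1 - u c2\<bar> - \<bar>v c1 - v c2\<bar>\<bar> / sqrt 2"
    by (simp add: diff_divide_distrib[symmetric])
  also have "\<dots> \<le> (\<bar>a\<bar> + \<bar>b\<bar>) / sqrt 2"
    by (intro divide_right_mono) (auto simp: a_def b_def)
  also have "\<dots> \<le> sqrt (a^2 + b^2)"
  proof (rule real_le_rsqrt)
    have "((\<bar>a\<bar> + \<bar>b\<bar>) / sqrt 2)^2 = (\<bar>a\<bar> + \<bar>b\<bar>)^2 / 2" by (simp add: power_divide)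
    also have "\<dots> \<le> a^2 + b^2"
      using sum_squares_ge_zero[of "\<bar>a\<bar> - \<bar>b\<bar>" 0] by (simp add: power2_eq_square algebra_simps)
    finally show "((\<bar>a\<bar> + \<bar>b\<bar>) / sqrt 2)^2 \<le> a^2 + b^2" .
  qed
  also have "\<dots> \<le> eucl_dist I u v"
    unfolding eucl_dist_def
  proof (rule real_sqrt_le_mono)
    have "a^2 + b^2 = (\<Sum>c\<in>{c1, c2}. (u c - v c)\<^sup>2)" using I by (simp add: a_def b_def)
    also have "\<dots> \<le> (\<Sum>c\<in>I. (u c - v c)\<^sup>2)" using I by (intro sum_mono2) auto
    finally show "a^2 + b^2 \<le> (\<Sum>c\<in>I. (u c - v c)\<^sup>2)" .
  qed
  finally show ?thesis .
qed



abbreviation "MM \<equiv> bern_mu \<Otimes>\<^sub>M bern_mu"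
abbreviation "OM \<equiv> PiM {1..2::nat} (\<lambda>_. MM)"

definition Gm :: "((int \<Rightarrow> bool) \<times> (int \<Rightarrow> bool) \<Rightarrow> (int \<Rightarrow> bool) \<times> (int \<Rightarrow> bool))
   \<Rightarrow> (nat \<Rightarrow> (int \<Rightarrow> bool) \<times> (int \<Rightarrow> bool)) \<Rightarrow> (nat \<Rightarrow> (int \<Rightarrow> bool) \<times> (int \<Rightarrow> bool))" where
  "Gm \<phi> = (\<lambda>z. \<lambda>i\<in>{1..2}. (if i = 1 then \<phi> else id) (z i))"

lemma MM_prob: "prob_space MM" by (rule prob_space_pair[OF bern_mu_prob bern_mu_prob])

lemma map_meas:
  assumes f: "f \<in> measurable bern_mu bern_mu" and g: "g \<in> measurable bern_mu bern_mu"
  shows "(\<lambda>(x, y). (f x, g y)) \<in> measurable MM MM"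
  unfolding split_beta' by (rule measurable_Pair[OF measurable_compose[OF measurable_fst f] measurable_compose[OF measurable_snd g]])

lemma Gm_props:
  assumes m: "\<phi> \<in> measurable MM MM" and d: "distr MM MM \<phi> = MM"
  shows "Gm \<phi> \<in> measurable OM OM" and "distr OM OM (Gm \<phi>) = OM"
proof -
  have gm: "(if i = 1 then \<phi> else id) \<in> measurable MM MM" for i::nat by (cases "i = 1") (auto simp: m)
  have gd: "distr MM MM (if i = 1 then \<phi> else id) = MM" for i::nat
    by (cases "i = 1") (auto simp: d distr_id[unfolded id_def] id_def)
  show "Gm \<phi> \<in> measurable OM OM" unfolding Gm_def
  proof (rule measurable_restrict)
    fix i :: nat assume i: "i \<in> {1..2}"
    show "(\<lambda>z. (if i = 1 then \<phi> else id) (z i)) \<in> measurable OM MM"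
      by (rule measurable_compose[OF measurable_component_singleton[OF i] gm])
  qed
  show "distr OM OM (Gm \<phi>) = OM" unfolding Gm_def
    by (rule PiM_compwise_pres[OF _ MM_prob gm gd]) simp
qed

definition "phi1 = (\<lambda>(x, y). (flip0 x, id y))"
definition "phi2 = (\<lambda>(x, y). (id x, flip0 y))"
definition "phi3 = (\<lambda>(x, y). (flip0 x, flip0 y))"

lemma phis:
  "phi1 \<in> measurable MM MM" "distr MM MM phi1 = MM"
  "phi2 \<in> measurable MM MM" "distr MM MM phi2 = MM"
  "phi3 \<in> measurable MM MM" "distr MM MM phi3 = MM"
proof -
  have im: "id \<in> measurable bern_mu bern_mu" by simp
  have id: "distr bern_mu bern_mu id = bern_mu" by (rule distr_id[unfolded id_def, folded id_def])
  show "phi1 \<in> measurable MM MM" unfolding phi1_def by (rule map_meas[OF flip0_meas im])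
  show "phi2 \<in> measurable MM MM" unfolding phi2_def by (rule map_meas[OF im flip0_meas])
  show "phi3 \<in> measurable MM MM" unfolding phi3_def by (rule map_meas[OF flip0_meas flip0_meas])
  show "distr MM MM phi1 = MM" unfolding phi1_def by (rule pair_pres[OF bern_mu_prob flip0_meas im flip0_pres id])
  show "distr MM MM phi2 = MM" unfolding phi2_def by (rule pair_pres[OF bern_mu_prob im flip0_meas id flip0_pres])
  show "distr MM MM phi3 = MM" unfolding phi3_def by (rule pair_pres[OF bern_mu_prob flip0_meas flip0_meas flip0_pres flip0_pres])
qed

definition "DX z = bern_d (fst (z (1::nat))) (fst (z 2))"
definition "DY z = bern_d (snd (z (1::nat))) (snd (z 2))"
definition "hr p z = (\<bar>DX z - DY z\<bar> / sqrt 2) powr p"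

lemma hr_meas: "hr p \<in> borel_measurable OM"
proof -
  have c1: "(\<lambda>z. z (1::nat)) \<in> measurable OM MM" by (rule measurable_component_singleton) simp
  have c2: "(\<lambda>z. z (2::nat)) \<in> measurable OM MM" by (rule measurable_component_singleton) simp
  have [measurable]: "DX \<in> borel_measurable OM" unfolding DX_def
    by (rule bern_d_meas[OF measurable_compose[OF c1 measurable_fst] measurable_compose[OF c2 measurable_fst]])
  have [measurable]: "DY \<in> borel_measurable OM" unfolding DY_def
    by (rule bern_d_meas[OF measurable_compose[OF c1 measurable_snd] measurable_compose[OF c2 measurable_snd]])
  show ?thesis unfolding hr_def[abs_def] by measurable
qed

lemma Gm_1: "Gm \<phi> z 1 = \<phi> (z 1)" and Gm_2: "Gm \<phi> z 2 = z 2"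
  by (auto simp: Gm_def)

lemma int_inv:
  assumes m: "\<phi> \<in> measurable MM MM" and d: "distr MM MM \<phi> = MM"
  shows "(\<integral>\<^sup>+ z. ennreal (hr p (Gm \<phi> z)) \<partial>OM) = (\<integral>\<^sup>+ z. ennreal (hr p z) \<partial>OM)"
proof -
  have "(\<integral>\<^sup>+ z. ennreal (hr p (Gm \<phi> z)) \<partial>OM) = (\<integral>\<^sup>+ z. ennreal (hr p z) \<partial>(distr OM OM (Gm \<phi>)))"
    using hr_meas Gm_props(1)[OF m d] by (subst nn_integral_distr) auto
  then show ?thesis unfolding Gm_props(2)[OF m d] .
qed

lemma Q_side:
  assumes p: "p \<ge> 1"
  shows "ennreal ((1 / (8 * sqrt 2)) powr p) \<le> (\<integral>\<^sup>+ z. ennreal (hr p z) \<partial>OM)"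
proof -
  define c :: real where "c = 1 / (8 * sqrt 2)"
  have cpos: "c > 0" by (simp add: c_def)
  define X where "X = (\<integral>\<^sup>+ z. ennreal (hr p z) \<partial>OM)"
  have hm: "(\<lambda>z. ennreal (hr p z)) \<in> borel_measurable OM" using hr_meas by measurable
  have hm': "(\<lambda>z. ennreal (hr p (Gm \<phi> z))) \<in> borel_measurable OM" if "\<phi> \<in> measurable MM MM" "distr MM MM \<phi> = MM" for \<phi>
    by (rule measurable_compose[OF Gm_props(1)[OF that] hm])
  have pw: "ennreal (4 * c powr p) \<le> ennreal (hr p z) + ennreal (hr p (Gm phi1 z)) + ennreal (hr p (Gm phi2 z)) + ennreal (hr p (Gm phi3 z))" for z
  proof -
    define x1 where "x1 = fst (z 1)" define x2 where "x2 = fst (z 2)"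
    define y1 where "y1 = snd (z 1)" define y2 where "y2 = snd (z 2)"
    define e where "e = (if x1 0 = x2 0 then 1/4 else - 1/4 :: real)"
    define e' where "e' = (if y1 0 = y2 0 then 1/4 else - 1/4 :: real)"
    define t where "t = bern_d x1 x2 - bern_d y1 y2"
    have h0: "hr p z = (\<bar>t\<bar> / sqrt 2) powr p"
      by (simp add: hr_def DX_def DY_def t_def x1_def x2_def y1_def y2_def)
    have g1: "Gm phi1 z 1 = (flip0 x1, y1)" by (simp add: Gm_def phi1_def x1_def y1_def split_beta)
    have g2: "Gm phi2 z 1 = (x1, flip0 y1)" by (simp add: Gm_def phi2_def x1_def y1_def split_beta)
    have g3: "Gm phi3 z 1 = (flip0 x1, flip0 y1)" by (simp add: Gm_def phi3_def x1_def y1_def split_beta)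
    have gg: "Gm \<phi> z 2 = z 2" for \<phi> by (simp add: Gm_def)
    have f1: "bern_d (flip0 x1) x2 = bern_d x1 x2 + e" by (simp add: bern_d_flip e_def)
    have f2: "bern_d (flip0 y1) y2 = bern_d y1 y2 + e'" by (simp add: bern_d_flip e'_def)
    have h1: "hr p (Gm phi1 z) = (\<bar>t + e\<bar> / sqrt 2) powr p"
      unfolding hr_def DX_def DY_def g1 gg fst_conv snd_conv x2_def[symmetric] y2_def[symmetric] f1 t_def
      by (simp add: algebra_simps)
    have h2: "hr p (Gm phi2 z) = (\<bar>t - e'\<bar> / sqrt 2) powr p"
      unfolding hr_def DX_def DY_def g2 gg fst_conv snd_conv x2_def[symmetric] y2_def[symmetric] f2 t_def
      by (simp add: algebra_simps)
    have h3: "hr p (Gm phi3 z) = (\<bar>t + e - e'\<bar> / sqrt 2) powr p"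
      unfolding hr_def DX_def DY_def g3 gg fst_conv snd_conv x2_def[symmetric] y2_def[symmetric] f1 f2 t_def
      by (simp add: algebra_simps)
    have ab: "\<bar>t\<bar> + \<bar>t + e\<bar> + \<bar>t - e'\<bar> + \<bar>t + e - e'\<bar> \<ge> 1/2"
      by (rule four_abs) (auto simp: e_def e'_def)
    have "\<bar>t\<bar> / sqrt 2 + \<bar>t + e\<bar> / sqrt 2 + \<bar>t - e'\<bar> / sqrt 2 + \<bar>t + e - e'\<bar> / sqrt 2
        = (\<bar>t\<bar> + \<bar>t + e\<bar> + \<bar>t - e'\<bar> + \<bar>t + e - e'\<bar>) / sqrt 2" by (simp add: add_divide_distrib)
    also have "\<dots> \<ge> (1/2) / sqrt 2" using ab by (intro divide_right_mono) auto
    finally have sum4: "4 * c \<le> \<bar>t\<bar> / sqrt 2 + \<bar>t + e\<bar> / sqrt 2 + \<bar>t - e'\<bar> / sqrt 2 + \<bar>t + e - e'\<bar> / sqrt 2"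
      by (simp add: c_def)
    have r: "4 * c powr p \<le> hr p z + hr p (Gm phi1 z) + hr p (Gm phi2 z) + hr p (Gm phi3 z)"
      unfolding h0 h1 h2 h3 by (rule four_powr[OF _ _ _ _ cpos p sum4]) auto
    have nn: "0 \<le> hr p w" for w by (simp add: hr_def)
    show ?thesis using r nn by (simp add: ennreal_plus[symmetric] del: ennreal_plus)
  qed
  have e1: "emeasure OM (space OM) = 1" by (rule prob_space.emeasure_space_1[OF prob_space_PiM[OF MM_prob]])
  have "ennreal (4 * c powr p) = (\<integral>\<^sup>+ z. ennreal (4 * c powr p) \<partial>OM)"
    unfolding nn_integral_const e1 by simp
  also have "\<dots> \<le> (\<integral>\<^sup>+ z. (ennreal (hr p z) + ennreal (hr p (Gm phi1 z)) + ennreal (hr p (Gm phi2 z)) + ennreal (hr p (Gm phi3 z))) \<partial>OM)"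
    by (rule nn_integral_mono) (rule pw)
  also have "\<dots> = (\<integral>\<^sup>+ z. ennreal (hr p z) \<partial>OM) + (\<integral>\<^sup>+ z. ennreal (hr p (Gm phi1 z)) \<partial>OM)
      + (\<integral>\<^sup>+ z. ennreal (hr p (Gm phi2 z)) \<partial>OM) + (\<integral>\<^sup>+ z. ennreal (hr p (Gm phi3 z)) \<partial>OM)"
    using hm hm'[OF phis(1,2)] hm'[OF phis(3,4)] hm'[OF phis(5,6)]
    by (simp add: nn_integral_add)
  also have "\<dots> = X + X + X + X"
    unfolding int_inv[OF phis(1,2)] int_inv[OF phis(3,4)] int_inv[OF phis(5,6)] X_def ..
  also have "\<dots> = 4 * X"
  proof -
    have "4 * X = 2 * (2 * X)" by (simp add: mult.assoc[symmetric])
    also have "\<dots> = X + X + X + X" by (simp only: mult_2 add.assoc)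
    finally show ?thesis by simp
  qed
  finally have "4 * ennreal (c powr p) \<le> 4 * X" by (simp add: ennreal_mult)
  then have "ennreal (c powr p) \<le> X" by (subst (asm) ennreal_mult_le_mult_iff) auto
  then show ?thesis unfolding c_def X_def .
qed



definition "cX = (False, 1::nat, 0::nat, 2::nat, 0::nat)"
definition "cY = (True, 1::nat, 0::nat, 2::nat, 0::nat)"
definition "fF u = \<bar>u cX - u cY\<bar> / sqrt 2"

lemma cXY: "0 < m \<Longrightarrow> cX \<in> coords 2 m" "0 < m \<Longrightarrow> cY \<in> coords 2 m" "cX \<noteq> cY"
  by (auto simp: cX_def cY_def coords_def)

lemma fF_meas:
  assumes "0 < m"
  shows "(\<lambda>u. ennreal (fF u powr p)) \<in> borel_measurable (PiM (coords 2 m) (\<lambda>_. borel))"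
    and "Measurable.pred (PiM (coords 2 m) (\<lambda>_. borel)) (\<lambda>u. fF u = 0)"
proof -
  have [measurable]: "(\<lambda>u. u cX) \<in> borel_measurable (PiM (coords 2 m) (\<lambda>_. borel))"
    by (rule measurable_component_singleton[OF cXY(1)[OF assms]])
  have [measurable]: "(\<lambda>u. u cY) \<in> borel_measurable (PiM (coords 2 m) (\<lambda>_. borel))"
    by (rule measurable_component_singleton[OF cXY(2)[OF assms]])
  have [measurable]: "fF \<in> borel_measurable (PiM (coords 2 m) (\<lambda>_. borel))"
    unfolding fF_def[abs_def] by measurable
  show "(\<lambda>u. ennreal (fF u powr p)) \<in> borel_measurable (PiM (coords 2 m) (\<lambda>_. borel))" by measurable
  show "Measurable.pred (PiM (coords 2 m) (\<lambda>_. borel)) (\<lambda>u. fF u = 0)" by measurable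
qed

lemma fF_dist: "0 < m \<Longrightarrow> fF (dist_arrays bern_d shift 2 m z) = \<bar>DX z - DY z\<bar> / sqrt 2"
  by (simp add: fF_def DX_def DY_def cX_def cY_def dist_arrays_def coords_def)

lemma L0_sets: "sets L0 = sets MM" unfolding L0_def by simp
lemma L0_prob: "prob_space L0" using L0_joining by (simp add: joinings_def)

lemma L0_diag: "AE w in L0. fst w = snd w"
proof -
  have [measurable]: "(\<lambda>w. fst w k) \<in> measurable MM (count_space UNIV)" for k
    by (rule measurable_compose[OF measurable_fst comp_meas])
  have [measurable]: "(\<lambda>w. snd w k) \<in> measurable MM (count_space UNIV)" for k
    by (rule measurable_compose[OF measurable_snd comp_meas])
  have e: "(\<lambda>w. fst w = snd w) = (\<lambda>w. \<forall>k. fst w k = snd w k)" by (auto simp: fun_eq_iff)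
  have "Measurable.pred MM (\<lambda>w. fst w = snd w)" unfolding e by measurable
  then have ms: "{w \<in> space MM. fst w = snd w} \<in> sets MM" by (simp add: pred_def)
  show ?thesis unfolding L0_def by (subst AE_distr_iff[OF diag_meas ms]) simp
qed

lemma P_side:
  assumes "0 < m"
  shows "AE u in Phi bern_d shift 2 m L0. fF u = 0"
proof -
  have ms: "{u \<in> space (PiM (coords 2 m) (\<lambda>_. borel)). fF u = 0} \<in> sets (PiM (coords 2 m) (\<lambda>_. borel))"
    using fF_meas(2)[OF assms] by (simp add: pred_def)
  have a1: "AE z in PiM {1..2} (\<lambda>_. L0). fst (z (1::nat)) = snd (z 1)"
    by (rule AE_PiM_component[OF L0_prob _ L0_diag]) simp
  have a2: "AE z in PiM {1..2} (\<lambda>_. L0). fst (z (2::nat)) = snd (z 2)"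
    by (rule AE_PiM_component[OF L0_prob _ L0_diag]) simp
  have "AE z in PiM {1..2} (\<lambda>_. L0). fF (dist_arrays bern_d shift 2 m z) = 0"
    using a1 a2 by eventually_elim (simp add: fF_dist[OF assms] DX_def DY_def)
  then show ?thesis unfolding Phi_def
    by (subst AE_distr_iff[OF dist_arrays_meas[OF L0_sets] ms]) simp
qed



lemma main_W:
  assumes m: "0 < m" and p: "p \<ge> 1"
  shows "1 / (8 * sqrt 2) \<le> wasserstein (coords 2 m) p (Phi bern_d shift 2 m L0) (Phi bern_d shift 2 m MM)"
proof (rule wass_lower[OF finite_coords Phi_props(1)[OF L0_sets L0_prob] Phi_props(1)[OF refl MM_prob]
      Phi_props(3)[OF L0_sets L0_prob] Phi_props(3)[OF refl MM_prob]])
  show "0 < 1 / (8 * sqrt 2)" by simp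
  show "0 < p" using p by simp
  fix \<pi> assume pi: "\<pi> \<in> couplings (Phi bern_d shift 2 m L0) (Phi bern_d shift 2 m MM)"
  define Q where "Q = Phi bern_d shift 2 m MM"
  have sQ: "sets Q = sets (PiM (coords 2 m) (\<lambda>_. borel))" unfolding Q_def by (rule Phi_props(2)[OF refl MM_prob])
  have spi: "sets \<pi> = sets (Phi bern_d shift 2 m L0 \<Otimes>\<^sub>M Q)" and dpi: "distr \<pi> Q snd = Q"
    using pi by (auto simp: couplings_def Q_def)
  have snd_m: "snd \<in> measurable \<pi> Q" by (subst measurable_cong_sets[OF spi refl]) (rule measurable_snd)
  have gQ: "(\<lambda>u. ennreal (fF u powr p)) \<in> borel_measurable Q"
    by (subst measurable_cong_sets[OF sQ refl]) (rule fF_meas(1)[OF m])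
  have ae: "AE w in \<pi>. fF (fst w) = 0" by (rule couplings_AE_fst[OF pi P_side[OF m]])
  have "ennreal ((1 / (8 * sqrt 2)) powr p) \<le> (\<integral>\<^sup>+ z. ennreal (hr p z) \<partial>OM)" by (rule Q_side[OF p])
  also have "\<dots> = (\<integral>\<^sup>+ z. ennreal (fF (dist_arrays bern_d shift 2 m z) powr p) \<partial>OM)"
    by (rule nn_integral_cong) (simp add: fF_dist[OF m] hr_def)
  also have "\<dots> = (\<integral>\<^sup>+ u. ennreal (fF u powr p) \<partial>Q)"
    unfolding Q_def Phi_def
    by (rule nn_integral_distr[symmetric, OF dist_arrays_meas[OF refl]]) (simp add: fF_meas(1)[OF m])
  also have "\<dots> = (\<integral>\<^sup>+ w. ennreal (fF (snd w) powr p) \<partial>\<pi>)"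
  proof -
    have "(\<integral>\<^sup>+ w. ennreal (fF (snd w) powr p) \<partial>\<pi>) = (\<integral>\<^sup>+ u. ennreal (fF u powr p) \<partial>(distr \<pi> Q snd))"
      using nn_integral_distr[OF snd_m, of "\<lambda>u. ennreal (fF u powr p)"] gQ by simp
    then show ?thesis unfolding dpi by simp
  qed
  also have "\<dots> \<le> (\<integral>\<^sup>+ w. ennreal (eucl_dist (coords 2 m) (fst w) (snd w) powr p) \<partial>\<pi>)"
  proof (rule nn_integral_mono_AE)
    show "AE w in \<pi>. ennreal (fF (snd w) powr p) \<le> ennreal (eucl_dist (coords 2 m) (fst w) (snd w) powr p)"
      using ae
    proof eventually_elim
      case (elim w)
      have "\<bar>fF (fst w) - fF (snd w)\<bar> \<le> eucl_dist (coords 2 m) (fst w) (snd w)"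
        unfolding fF_def by (rule lip[OF finite_coords cXY(1)[OF m] cXY(2)[OF m] cXY(3)])
      then have "fF (snd w) \<le> eucl_dist (coords 2 m) (fst w) (snd w)" using elim by simp
      then have "fF (snd w) powr p \<le> eucl_dist (coords 2 m) (fst w) (snd w) powr p"
        using p by (intro powr_mono2) (auto simp: fF_def)
      then show ?case by (rule ennreal_leI)
    qed
  qed
  finally show "ennreal ((1 / (8 * sqrt 2)) powr p) \<le> (\<integral>\<^sup>+ w. ennreal (eucl_dist (coords 2 m) (fst w) (snd w) powr p) \<partial>\<pi>)" .
qed

theorem proposition18:
  fixes m :: nat and p :: real
  assumes "m \<ge> 1" and "p \<ge> 1"
  shows "Dep bern_d bern_mu shift 2 m p \<ge> ereal (5 / (144 * sqrt 2))"
proof -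
  have m: "0 < m" using assms(1) by simp
  have "ereal (5 / (144 * sqrt 2)) \<le> ereal (1 / (8 * sqrt 2))" by (simp add: divide_simps)
  also have "\<dots> \<le> ereal (wasserstein (coords 2 m) p (Phi bern_d shift 2 m L0) (Phi bern_d shift 2 m (bern_mu \<Otimes>\<^sub>M bern_mu)))"
    using main_W[OF m assms(2)] by simp
  also have "\<dots> \<le> Dep bern_d bern_mu shift 2 m p"
    unfolding Dep_def by (rule SUP_upper[OF L0_joining])
  finally show ?thesis .
qed

end
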